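(* Let $x_0\in\mathbb{R}^d\setminus\{0\}$ be fixed and let $\Phi:\mathbb{R}^d\to\mathbb{R}$ be a random ReLU network of width $N$ with $L$ hidden layers as described in the context. Then almost surely $\Phi$ is differentiable at $x_0$ with $$(\nabla\Phi(x_0))^T=W^{(L)}D^{(L-1)}(x_0)W^{(L-1)}\cdots D^{(0)}(x_0)W^{(0)}.$$
   Context: The network is $\Phi = V^{(L)}\circ\mathrm{ReLU}\circ\cdots\circ\mathrm{ReLU}\circ V^{(0)}$, $V^{(\ell)}(x)=W^{(\ell)}x+b^{(\ell)}$, $\mathrm{ReLU}(t)=\max\{0,t\}$ componentwise, with $W^{(0)}\in\mathbb{R}^{N\times d}$, $W^{(\ell)}\in\mathbb{R}^{N\times N}$ ($1\le\ell\le L-1$), $W^{(L)}\in\mathbb{R}^{1\times N}$, $b^{(\ell)}\in\mathbb{R}^N$ ($\ell<L$), $b^{(L)}\in\mathbb{R}$; entries of $W^{(\ell)}$, $\ell<L$, i.i.d. $\mathcal{N}(0,2/N)$; entries of $W^{(L)}$ i.i.d. $\mathcal{N}(0,1)$; $b^{(\ell)}_i\sim\mathcal{D}^{(\ell)}_i$ for arbitrary probability distributions on $\mathbb{R}$; all jointly independent. For $v\in\mathbb{R}^N$, $\Delta(v)$ is diagonal with entries $\mathbb{1}_{v_i>0}$. With $x^{(0)}=x_0$, recursively $D^{(\ell)}(x_0)=\Delta(W^{(\ell)}x^{(\ell)}+b^{(\ell)})$ and $x^{(\ell+1)}=\mathrm{ReLU}(W^{(\ell)}x^{(\ell)}+b^{(\ell)})$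 for $0\le\ell<L$. *)

theory Defs
  imports "HOL-Probability.Probability"
begin

text \<open>Input vectors live in real^'d
 (d = CARD('d)); hidden layers have width N (indices 0..N-1); there are L
 hidden layers. A sample point omega assigns a real to each parameter:
 W0 i j = entry (i,j) of W^(0); W l i j = entry (i,j) of W^(l), 1 <= l <= L-1;
 WL j = entry j of W^(L); B l i = entry i of b^(l), l < L; BL = b^(L).\<close>

datatype 'd prm = W0 nat 'd | W nat nat nat | WL nat | B nat nat | BL

definition prm_index :: "nat \<Rightarrow> nat \<Rightarrow> 'd prm set" where
  "prm_index N L =
     {W0 i j | i j. i < N}
   \<union> {W l i j | l i j. 1 \<le> l \<and> l < L \<and> i < N \<and> j < N}
   \<union> {WL j | j. j < N}
   \<union> {B l i | l i. l < L \<and> i < N}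
   \<union> {BL}"

text \<open>Distribution of each parameter: weights of layers l < L are N(0, 2/N)
 (standard deviation sqrt(2/N)), weights of the output layer are N(0,1),
 bias b^(l)_i has the arbitrary distribution Dist l i, and b^(L) has DistL.\<close>

fun prm_dist :: "nat \<Rightarrow> (nat \<Rightarrow> nat \<Rightarrow> real measure) \<Rightarrow> real measure \<Rightarrow> 'd prm \<Rightarrow> real measure" where
  "prm_dist N Dist DistL (W0 i j) = density lborel (normal_density 0 (sqrt (2 / real N)))"
| "prm_dist N Dist DistL (W l i j) = density lborel (normal_density 0 (sqrt (2 / real N)))"
| "prm_dist N Dist DistL (WL j) = density lborel (normal_density 0 1)"
| "prm_dist N Dist DistL (B l i) = Dist l i"
| "prm_dist N Dist DistL BL = DistL"

definition param_space :: "nat \<Rightarrow> nat \<Rightarrow> (nat \<Rightarrow> nat \<Rightarrow> real measure) \<Rightarrow> real measure \<Rightarrow> ('d::finite prm \<Rightarrow> real) measure" where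
  "param_space N L Dist DistL = PiM (prm_index N L) (prm_dist N Dist DistL)"

fun preact :: "('d::finite prm \<Rightarrow> real) \<Rightarrow> nat \<Rightarrow> real^'d \<Rightarrow> nat \<Rightarrow> nat \<Rightarrow> real" where
  "preact w N x 0 i = (\<Sum>j\<in>UNIV. w (W0 i j) * x $ j) + w (B 0 i)"
| "preact w N x (Suc l) i =
     (\<Sum>j<N. w (W (Suc l) i j) * max 0 (preact w N x l j)) + w (B (Suc l) i)"

text \<open>x^(l+1)_i = ReLU(preact l)_i.\<close>
definition hidden :: "('d::finite prm \<Rightarrow> real) \<Rightarrow> nat \<Rightarrow> real^'d \<Rightarrow> nat \<Rightarrow> nat \<Rightarrow> real" where
  "hidden w N x l i = max 0 (preact w N x l i)"

definition relu_net :: "('d::finite prm \<Rightarrow> real) \<Rightarrow> nat \<Rightarrow> nat \<Rightarrow> real^'d \<Rightarrow> real" where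
  "relu_net w N L x = (\<Sum>j<N. w (WL j) * hidden w N x (L - 1) j) + w BL"

text \<open>Diagonal entries of D^(l)(x0) = Delta(W^(l) x^(l) + b^(l)).\<close>
definition act_pattern :: "('d::finite prm \<Rightarrow> real) \<Rightarrow> nat \<Rightarrow> real^'d \<Rightarrow> nat \<Rightarrow> nat \<Rightarrow> real" where
  "act_pattern w N x0 l i = (if preact w N x0 l i > 0 then 1 else 0)"

text \<open>chain w N x0 l h = D^(l)(x0) W^(l) ... D^(0)(x0) W^(0) h.\<close>
fun chain :: "('d::finite prm \<Rightarrow> real) \<Rightarrow> nat \<Rightarrow> real^'d \<Rightarrow> nat \<Rightarrow> real^'d \<Rightarrow> nat \<Rightarrow> real" where
  "chain w N x0 0 h i = act_pattern w N x0 0 i * (\<Sum>j\<in>UNIV. w (W0 i j) * h $ j)"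
| "chain w N x0 (Suc l) h i =
     act_pattern w N x0 (Suc l) i * (\<Sum>j<N. w (W (Suc l) i j) * chain w N x0 l h j)"

text \<open>The linear map h |-> W^(L) D^(L-1)(x0) W^(L-1) ... D^(0)(x0) W^(0) h.\<close>
definition grad_product :: "('d::finite prm \<Rightarrow> real) \<Rightarrow> nat \<Rightarrow> nat \<Rightarrow> real^'d \<Rightarrow> real^'d \<Rightarrow> real" where
  "grad_product w N L x0 h = (\<Sum>j<N. w (WL j) * chain w N x0 (L - 1) h j)"

end

theory Submission imports Defs begin

lemma null_slice:
  fixes M :: "'i \<Rightarrow> real measure" and g c :: "('i \<Rightarrow> real) \<Rightarrow> real"
  assumes sf: "\<And>i. sigma_finite_measure (M i)" and fin: "finite I" and kI: "k \<in> I"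
    and pt: "\<And>a. emeasure (M k) {a} = 0" and sk: "sets (M k) = sets borel"
    and E: "E \<in> sets (PiM I M)"
    and sub: "\<And>w. w \<in> E \<Longrightarrow> g w \<noteq> 0 \<and> w k * g w + c w = 0"
    and gk: "\<And>w t. g (w(k:=t)) = g w" and ck: "\<And>w t. c (w(k:=t)) = c w"
  shows "emeasure (PiM I M) E = 0"
proof -
  interpret product_sigma_finite M by (simp add: product_sigma_finite_def sf)
  have II: "I = insert k (I - {k})" using kI by auto
  have "emeasure (PiM I M) E = (\<integral>\<^sup>+ w. indicator E w \<partial>PiM I M)"
    using E by simp
  also have "\<dots> = (\<integral>\<^sup>+ x. (\<integral>\<^sup>+ y. indicator E (x(k := y)) \<partial>(M k)) \<partial>(Pi\<^sub>M (I - {k}) M))"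
    apply (subst II)
    apply (rule product_nn_integral_insert)
    using fin E II by auto
  also have "\<dots> \<le> (\<integral>\<^sup>+ x. (\<integral>\<^sup>+ y. indicator {- c x / g x} y \<partial>(M k)) \<partial>(Pi\<^sub>M (I - {k}) M))"
  proof (intro nn_integral_mono)
    fix x y
    show "indicator E (x(k := y)) \<le> (indicator {- c x / g x} y :: ennreal)"
    proof (cases "x(k := y) \<in> E")
      case True
      from sub[OF True] have "g x \<noteq> 0" "y * g x + c x = 0" using gk ck by auto
      then have "y = - c x / g x" by (simp add: field_simps)
      then show ?thesis using True by simp
    qed simp
  qed
  also have "\<dots> = 0" using pt sk by (simp add: nn_integral_indicator)
  finally show ?thesis by simp
qed


fun pre_lin :: "('d::finite prm \<Rightarrow> real) \<Rightarrow> nat \<Rightarrow> real^'d \<Rightarrow> nat \<Rightarrow> real^'d \<Rightarrow> nat \<Rightarrow> real" where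
  "pre_lin w N x0 0 h i = (\<Sum>j\<in>UNIV. w (W0 i j) * h $ j)"
| "pre_lin w N x0 (Suc l) h i = (\<Sum>j<N. w (W (Suc l) i j) * chain w N x0 l h j)"

lemma chain_eq: "chain w N x0 l h i = act_pattern w N x0 l i * pre_lin w N x0 l h i"
  by (cases l) auto

lemma chain_add: "chain w N x0 l (a + b) i = chain w N x0 l a i + chain w N x0 l b i"
  by (induction l arbitrary: i) (simp_all add: algebra_simps sum.distrib)

lemma chain_scale: "chain w N x0 l (c *\<^sub>R a) i = c * chain w N x0 l a i"
  by (induction l arbitrary: i) (simp_all add: algebra_simps sum_distrib_left)

lemma chain_linear: "linear (\<lambda>h. chain w N x0 l h i)"
  by (rule linearI) (simp_all add: chain_add chain_scale)

lemma chain_diff: "chain w N x0 l (a - b) i = chain w N x0 l a i - chain w N x0 l b i"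
  using linear_diff[OF chain_linear] by blast

lemma pre_lin_linear: "linear (\<lambda>h. pre_lin w N x0 l h i)"
proof (cases l)
  case 0
  show ?thesis unfolding 0 by (rule linearI) (simp_all add: algebra_simps sum.distrib sum_distrib_left)
next
  case (Suc m)
  show ?thesis unfolding Suc by (rule linearI) (simp_all add: algebra_simps sum.distrib sum_distrib_left chain_add chain_scale)
qed

lemma pre_lin_cont: "continuous_on UNIV (\<lambda>x. pre_lin w N x0 l (x - x0) i)"
proof -
  have "bounded_linear (\<lambda>h. pre_lin w N x0 l h i)"
    using pre_lin_linear linear_conv_bounded_linear by blast
  then have "continuous_on UNIV (\<lambda>h. pre_lin w N x0 l h i)"
    by (simp add: linear_continuous_on)
  then show ?thesis
    by (rule continuous_on_compose2[of UNIV]) (auto intro!: continuous_intros)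
qed

lemma step_relu:
  fixes p :: "real^'d::finite \<Rightarrow> nat \<Rightarrow> real" and q :: "real^'d \<Rightarrow> nat \<Rightarrow> real"
  assumes "open U" "x0 \<in> U" "\<forall>x\<in>U. \<forall>i<N. p x i = p x0 i + q (x - x0) i"
    and cont: "\<And>i. continuous_on UNIV (\<lambda>x. q (x - x0) i)"
    and good: "\<forall>i<N. p x0 i \<noteq> 0 \<or> (\<forall>h. q h i = 0)"
  shows "\<exists>V. open V \<and> x0 \<in> V \<and> (\<forall>x\<in>V. \<forall>i<N. max 0 (p x i) = max 0 (p x0 i) + (if p x0 i > 0 then 1 else 0) * q (x - x0) i)"
proof -
  have "\<forall>i<N. \<exists>V. open V \<and> x0 \<in> V \<and> (\<forall>x\<in>V. max 0 (p x i) = max 0 (p x0 i) + (if p x0 i > 0 then 1 else 0) * q (x - x0) i)"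
  proof (intro allI impI)
    fix i assume i: "i < N"
    have q0: "q 0 i = 0" using assms(2) assms(3)[rule_format, of x0 i] i by simp
    have c2: "continuous_on UNIV (\<lambda>x. p x0 i + q (x - x0) i)"
      by (intro continuous_intros cont)
    consider "p x0 i > 0" | "p x0 i < 0" | "p x0 i = 0" by linarith
    then show "\<exists>V. open V \<and> x0 \<in> V \<and> (\<forall>x\<in>V. max 0 (p x i) = max 0 (p x0 i) + (if p x0 i > 0 then 1 else 0) * q (x - x0) i)"
    proof cases
      case 1
      let ?V = "U \<inter> {x. 0 < p x0 i + q (x - x0) i}"
      have "open ?V" using assms(1) by (intro open_Int open_Collect_less c2 continuous_intros)
      moreover have "x0 \<in> ?V" using assms(2) 1 q0 by (auto) 
      moreover have "\<forall>x\<in>?V. max 0 (p x i) = max 0 (p x0 i) + (if p x0 i > 0 then 1 else 0) * q (x - x0) i"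
      proof
        fix x assume "x \<in> ?V"
        then have "p x i = p x0 i + q (x - x0) i" "x \<in> ?V" using assms(3) i by auto
        then show "max 0 (p x i) = max 0 (p x0 i) + (if p x0 i > 0 then 1 else 0) * q (x - x0) i"
          using 1 by simp
      qed
      ultimately show ?thesis by blast
    next
      case 2
      let ?V = "U \<inter> {x. p x0 i + q (x - x0) i < 0}"
      have "open ?V" using assms(1) by (intro open_Int open_Collect_less c2 continuous_intros)
      moreover have "x0 \<in> ?V" using assms(2) 2 q0 by (auto) 
      moreover have "\<forall>x\<in>?V. max 0 (p x i) = max 0 (p x0 i) + (if p x0 i > 0 then 1 else 0) * q (x - x0) i"
      proof
        fix x assume "x \<in> ?V"
        then have "p x i = p x0 i + q (x - x0) i" "x \<in> ?V" using assms(3) i by auto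
        then show "max 0 (p x i) = max 0 (p x0 i) + (if p x0 i > 0 then 1 else 0) * q (x - x0) i"
          using 2 by simp
      qed
      ultimately show ?thesis by blast
    next
      case 3
      have qz: "\<forall>h. q h i = 0" using good i 3 by blast
      have "\<forall>x\<in>U. max 0 (p x i) = max 0 (p x0 i) + (if p x0 i > 0 then 1 else 0) * q (x - x0) i"
      proof
        fix x assume "x \<in> U"
        then have "p x i = p x0 i + q (x - x0) i" using assms(3) i by blast
        then show "max 0 (p x i) = max 0 (p x0 i) + (if p x0 i > 0 then 1 else 0) * q (x - x0) i"
          using 3 qz by simp
      qed
      then show ?thesis using assms(1,2) by blast
    qed
  qed
  then obtain V where V: "\<forall>i<N. open (V i) \<and> x0 \<in> V i \<and> (\<forall>x\<in>V i. max 0 (p x i) = max 0 (p x0 i) + (if p x0 i > 0 then 1 else 0) * q (x - x0) i)"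
    by metis
  have "open (\<Inter>i\<in>{..<N}. V i)" using V by (intro open_INT) auto
  moreover have "x0 \<in> (\<Inter>i\<in>{..<N}. V i)" using V by blast
  moreover have "\<forall>x\<in>(\<Inter>i\<in>{..<N}. V i). \<forall>i<N. max 0 (p x i) = max 0 (p x0 i) + (if p x0 i > 0 then 1 else 0) * q (x - x0) i"
    using V by blast
  ultimately show ?thesis by blast
qed


definition good :: "('d::finite prm \<Rightarrow> real) \<Rightarrow> nat \<Rightarrow> real^'d \<Rightarrow> nat \<Rightarrow> nat \<Rightarrow> bool" where
  "good w N x0 l i \<longleftrightarrow> preact w N x0 l i \<noteq> 0 \<or> (\<exists>m. l = Suc m \<and> (\<forall>j<N. preact w N x0 m j \<le> 0))"

lemma local_affine:
  assumes "\<forall>l'\<le>l. \<forall>i<N. good w N x0 l' i"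
  shows "\<exists>U. open U \<and> x0 \<in> U \<and> (\<forall>x\<in>U. \<forall>i<N. max 0 (preact w N x l i) = max 0 (preact w N x0 l i) + chain w N x0 l (x - x0) i)"
  using assms
proof (induction l)
  case 0
  have eq: "\<forall>x\<in>UNIV. \<forall>i<N. preact w N x 0 i = preact w N x0 0 i + pre_lin w N x0 0 (x - x0) i"
    by (simp add: algebra_simps sum.distrib[symmetric] sum_subtractf[symmetric])
  have g: "\<forall>i<N. preact w N x0 0 i \<noteq> 0 \<or> (\<forall>h. pre_lin w N x0 0 h i = 0)"
    using "0.prems" by (simp add: good_def)
  from step_relu[OF open_UNIV UNIV_I eq pre_lin_cont g]
  show ?case by (simp add: chain_eq act_pattern_def)
next
  case (Suc m)
  from Suc.IH Suc.prems obtain U where U: "open U" "x0 \<in> U"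
    "\<forall>x\<in>U. \<forall>i<N. max 0 (preact w N x m i) = max 0 (preact w N x0 m i) + chain w N x0 m (x - x0) i"
    by (meson le_SucI)
  have eq: "\<forall>x\<in>U. \<forall>i<N. preact w N x (Suc m) i = preact w N x0 (Suc m) i + pre_lin w N x0 (Suc m) (x - x0) i"
  proof (intro ballI allI impI)
    fix x i assume x: "x \<in> U" and i: "i < N"
    have "(\<Sum>j<N. w (W (Suc m) i j) * max 0 (preact w N x m j)) =
       (\<Sum>j<N. w (W (Suc m) i j) * (max 0 (preact w N x0 m j) + chain w N x0 m (x - x0) j))"
      using U(3) x by (intro sum.cong) auto
    then show "preact w N x (Suc m) i = preact w N x0 (Suc m) i + pre_lin w N x0 (Suc m) (x - x0) i"
      by (simp add: algebra_simps sum.distrib)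
  qed
  have g: "\<forall>i<N. preact w N x0 (Suc m) i \<noteq> 0 \<or> (\<forall>h. pre_lin w N x0 (Suc m) h i = 0)"
  proof (intro allI impI)
    fix i assume i: "i < N"
    have "good w N x0 (Suc m) i" using Suc.prems i by blast
    then have "preact w N x0 (Suc m) i \<noteq> 0 \<or> (\<forall>j<N. preact w N x0 m j \<le> 0)"
      by (simp add: good_def)
    then show "preact w N x0 (Suc m) i \<noteq> 0 \<or> (\<forall>h. pre_lin w N x0 (Suc m) h i = 0)"
    proof
      assume "\<forall>j<N. preact w N x0 m j \<le> 0"
      then have "\<forall>h. \<forall>j<N. chain w N x0 m h j = 0"
        by (auto simp add: chain_eq act_pattern_def not_less[symmetric])
      then show ?thesis by simp
    qed simp
  qed
  from step_relu[OF U(1,2) eq pre_lin_cont g]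
  show ?case by (simp add: chain_eq act_pattern_def)
qed

lemma grad_linear: "linear (grad_product w N L x0)"
  unfolding grad_product_def
  by (rule linearI) (simp_all add: algebra_simps sum.distrib sum_distrib_left chain_add chain_scale)

lemma deterministic:
  assumes "L \<ge> 1" "\<forall>l<L. \<forall>i<N. good w N x0 l i"
  shows "((\<lambda>x. relu_net w N L x) has_derivative grad_product w N L x0) (at x0)"
proof -
  have "\<forall>l'\<le>L-1. \<forall>i<N. good w N x0 l' i" using assms by auto
  from local_affine[OF this] obtain U where U: "open U" "x0 \<in> U"
    "\<forall>x\<in>U. \<forall>i<N. max 0 (preact w N x (L-1) i) = max 0 (preact w N x0 (L-1) i) + chain w N x0 (L-1) (x - x0) i"
    by blast
  have bl: "bounded_linear (grad_product w N L x0)"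
    using grad_linear linear_conv_bounded_linear by blast
  define C where "C = relu_net w N L x0 - grad_product w N L x0 x0"
  have d: "((\<lambda>x. C + grad_product w N L x0 x) has_derivative grad_product w N L x0) (at x0)"
    using has_derivative_add_const[OF bounded_linear_imp_has_derivative[OF bl]]
    by (simp add: add.commute)
  show ?thesis
  proof (rule has_derivative_transform_within_open[OF d U(1,2)])
    fix x assume x: "x \<in> U"
    have "relu_net w N L x = (\<Sum>j<N. w (WL j) * (max 0 (preact w N x0 (L-1) j) + chain w N x0 (L-1) (x - x0) j)) + w BL"
      unfolding relu_net_def hidden_def using U(3) x by (auto intro!: sum.cong)
    also have "\<dots> = relu_net w N L x0 + grad_product w N L x0 (x - x0)"
      by (simp add: relu_net_def hidden_def grad_product_def algebra_simps sum.distrib)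
    also have "\<dots> = C + grad_product w N L x0 x"
      unfolding C_def using linear_diff[OF grad_linear] by simp
    finally show "C + grad_product w N L x0 x = relu_net w N L x" by simp
  qed
qed


lemma finite_prm_index: "finite (prm_index N L :: 'd::finite prm set)"
proof -
  have "prm_index N L \<subseteq> (\<lambda>(i,j). W0 i j) ` ({..<N} \<times> (UNIV::'d set)) \<union> (\<lambda>(l,i,j). W l i j) ` ({..<L} \<times> {..<N} \<times> {..<N})
     \<union> WL ` {..<N} \<union> (\<lambda>(l,i). B l i) ` ({..<L} \<times> {..<N}) \<union> {BL}"
    unfolding prm_index_def by (fastforce simp: image_iff)
  moreover have "finite ((\<lambda>(i,j). W0 i j) ` ({..<N} \<times> (UNIV::'d set)) \<union> (\<lambda>(l,i,j). W l i j) ` ({..<L} \<times> {..<N} \<times> {..<N})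
     \<union> WL ` {..<N} \<union> (\<lambda>(l,i). B l i) ` ({..<L} \<times> {..<N}) \<union> {BL})" by auto
  ultimately show ?thesis by (rule finite_subset)
qed

lemma point_null: "emeasure (density lborel (normal_density 0 s)) {a} = 0"
proof -
  have "{a} \<in> null_sets lborel" by (intro null_setsI) auto
  then show ?thesis by (simp add: emeasure_density nn_integral_null_set)
qed

context
  fixes N L :: nat and Dist :: "nat \<Rightarrow> nat \<Rightarrow> real measure" and DistL :: "real measure"
  assumes sD: "\<And>l i. sets (Dist l i) = sets borel" and sL: "sets DistL = sets borel"
begin

lemma sets_prm_dist: "sets (prm_dist N Dist DistL p) = sets borel"
  by (cases p) (simp_all add: sD sL)

lemma coord_meas[measurable]: "(\<lambda>w. w p) \<in> borel_measurable (param_space N L Dist DistL :: ('d::finite prm \<Rightarrow> real) measure)"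
proof (cases "p \<in> (prm_index N L :: 'd prm set)")
  case True
  then have "(\<lambda>w. w p) \<in> measurable (param_space N L Dist DistL :: ('d::finite prm \<Rightarrow> real) measure) (prm_dist N Dist DistL p)"
    unfolding param_space_def by (rule measurable_component_singleton)
  then show ?thesis using measurable_cong_sets[OF refl sets_prm_dist] by blast
next
  case False
  have "(\<lambda>w. undefined) \<in> borel_measurable (param_space N L Dist DistL :: ('d::finite prm \<Rightarrow> real) measure)" by simp
  moreover have "\<And>w. w \<in> space (param_space N L Dist DistL :: ('d::finite prm \<Rightarrow> real) measure) \<Longrightarrow> w p = undefined"
    using False unfolding param_space_def space_PiM by (blast intro: PiE_arb)
  ultimately show ?thesis using measurable_cong by (smt (verit))
qed

lemma preact_meas[measurable]: "(\<lambda>w. preact w N' x l i) \<in> borel_measurable (param_space N L Dist DistL :: ('d::finite prm \<Rightarrow> real) measure)"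
  by (induction l arbitrary: i) simp_all

end


lemma preact_upd: "m < a \<Longrightarrow> preact (w(W a b c := t)) N x m j = preact w N x m j"
  by (induction m arbitrary: j) simp_all

theorem theoremE1:
  fixes x0 :: "real^'d::finite"
    and N L :: nat
    and Dist :: "nat \<Rightarrow> nat \<Rightarrow> real measure"
    and DistL :: "real measure"
  assumes "N \<ge> 1" and "L \<ge> 1"
    and "x0 \<noteq> 0"
    and "\<And>l i. prob_space (Dist l i)"
    and "\<And>l i. sets (Dist l i) = sets borel"
    and "prob_space DistL" and "sets DistL = sets borel"
  shows "AE w in (param_space N L Dist DistL :: ('d prm \<Rightarrow> real) measure).
           ((\<lambda>x. relu_net w N L x) has_derivative grad_product w N L x0) (at x0)"
proof -
  let ?P = "param_space N L Dist DistL :: ('d prm \<Rightarrow> real) measure"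
  let ?M = "prm_dist N Dist DistL :: 'd prm \<Rightarrow> real measure"
  let ?I = "prm_index N L :: 'd prm set"
  have N0: "0 < N" using assms(1) by simp
  have sf: "\<And>p. sigma_finite_measure (?M p)"
  proof -
    fix p show "sigma_finite_measure (?M p)"
      by (cases p) (auto intro!: prob_space_imp_sigma_finite prob_space_normal_density assms(4,6) simp: N0)
  qed
  have meas[measurable]: "\<And>N' x l i. (\<lambda>w. preact w N' x l i) \<in> borel_measurable ?P"
    by (rule preact_meas[OF assms(5,7)])
  have nullE: "emeasure ?P E = 0"
    if "k \<in> ?I" "\<And>a. emeasure (?M k) {a} = 0" "sets (?M k) = sets borel" "E \<in> sets ?P"
       "\<And>w. w \<in> E \<Longrightarrow> g w \<noteq> 0 \<and> w k * g w + c w = 0"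
       "\<And>w t. g (w(k:=t)) = g w" "\<And>w t. c (w(k:=t)) = c w" for k E g c
    using null_slice[OF sf finite_prm_index that(1-3) that(4)[unfolded param_space_def] that(5-7)] unfolding param_space_def by simp
  have good0: "AE w in ?P. good w N x0 0 i" if i: "i < N" for i
  proof -
    obtain j0 where j0: "x0 $ j0 \<noteq> 0" using assms(3) by (metis vec_eq_iff zero_index)
    let ?E = "{w \<in> space ?P. preact w N x0 0 i = 0}"
    have "emeasure ?P ?E = 0"
    proof (rule nullE[where k = "W0 i j0" and g = "\<lambda>w. x0 $ j0"
          and c = "\<lambda>w. (\<Sum>j\<in>UNIV - {j0}. w (W0 i j) * x0 $ j) + w (B 0 i)"])
      show "W0 i j0 \<in> ?I" using i by (simp add: prm_index_def)
      show "?E \<in> sets ?P" by measurable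
      fix w assume "w \<in> ?E"
      then have "(\<Sum>j\<in>UNIV. w (W0 i j) * x0 $ j) + w (B 0 i) = 0" by simp
      then show "x0 $ j0 \<noteq> 0 \<and> w (W0 i j0) * x0 $ j0 + ((\<Sum>j\<in>UNIV - {j0}. w (W0 i j) * x0 $ j) + w (B 0 i)) = 0"
        using j0 by (simp add: sum.remove[of UNIV j0] add.assoc)
    qed (auto simp: point_null)
    then have "?E \<in> null_sets ?P" by (intro null_setsI) measurable
    then show ?thesis by (rule AE_I') (auto simp: good_def)
  qed
  have goodS: "AE w in ?P. good w N x0 (Suc m) i" if i: "i < N" and m: "Suc m < L" for i m
  proof -
    have "AE w in ?P. \<forall>j0\<in>{..<N}. \<not> (preact w N x0 (Suc m) i = 0 \<and> preact w N x0 m j0 > 0)"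
    proof (rule AE_finite_allI)
      show "finite {..<N}" by simp
      fix j0 assume "j0 \<in> {..<N}"
      then have j0: "j0 < N" by simp
      let ?E = "{w \<in> space ?P. preact w N x0 (Suc m) i = 0 \<and> preact w N x0 m j0 > 0}"
      have "emeasure ?P ?E = 0"
      proof (rule nullE[where k = "W (Suc m) i j0" and g = "\<lambda>w. max 0 (preact w N x0 m j0)"
            and c = "\<lambda>w. (\<Sum>j\<in>{..<N} - {j0}. w (W (Suc m) i j) * max 0 (preact w N x0 m j)) + w (B (Suc m) i)"])
        show "W (Suc m) i j0 \<in> ?I" using i j0 m by (simp add: prm_index_def)
        show "?E \<in> sets ?P" by measurable
        fix w assume w: "w \<in> ?E"
        then have "(\<Sum>j<N. w (W (Suc m) i j) * max 0 (preact w N x0 m j)) + w (B (Suc m) i) = 0" by simp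
        then show "max 0 (preact w N x0 m j0) \<noteq> 0 \<and> w (W (Suc m) i j0) * max 0 (preact w N x0 m j0) + ((\<Sum>j\<in>{..<N} - {j0}. w (W (Suc m) i j) * max 0 (preact w N x0 m j)) + w (B (Suc m) i)) = 0"
          using j0 w by (simp add: sum.remove[of "{..<N}" j0] add.assoc)
      next
        fix w t show "max 0 (preact (w(W (Suc m) i j0 := t)) N x0 m j0) = max 0 (preact w N x0 m j0)"
          by (simp add: preact_upd)
      next
        fix w t
        show "(\<Sum>j\<in>{..<N} - {j0}. (w(W (Suc m) i j0 := t)) (W (Suc m) i j) * max 0 (preact (w(W (Suc m) i j0 := t)) N x0 m j)) + (w(W (Suc m) i j0 := t)) (B (Suc m) i)
           = (\<Sum>j\<in>{..<N} - {j0}. w (W (Suc m) i j) * max 0 (preact w N x0 m j)) + w (B (Suc m) i)"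
          by (auto simp: preact_upd intro!: sum.cong)
      qed (auto simp: point_null)
      then have "?E \<in> null_sets ?P" by (intro null_setsI) measurable
      then show "AE w in ?P. \<not> (preact w N x0 (Suc m) i = 0 \<and> preact w N x0 m j0 > 0)"
        by (rule AE_I') auto
    qed
    then show ?thesis
      by (rule eventually_mono) (auto simp: good_def not_less)
  qed
  have "AE w in ?P. \<forall>l\<in>{..<L}. \<forall>i\<in>{..<N}. good w N x0 l i"
  proof (intro AE_finite_allI, simp_all)
    fix l i assume "l < L" "i < N"
    then show "AE w in ?P. good w N x0 l i"
      using good0 goodS by (cases l) auto
  qed
  then show ?thesis
    by (rule eventually_mono) (intro deterministic[OF assms(2)], auto)
qed

end
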